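(* Let $\Pi$ be a ground HEX-program and $\mathbf{A}$ an interpretation. Let $\mathcal{C}$ be the partition of $A(\Pi)$ into subset-maximal strongly connected components of the graph with edge relation $\rightarrow\cup\rightarrow_e$, and for $C\in\mathcal{C}$ let $\Pi_C=\{r\in\Pi\mid H(r)\cap C\neq\emptyset\}$. If $U\neq\emptyset$ is an unfounded set of $\Pi$ with respect to $\mathbf{A}$, then for some $C\in\mathcal{C}$ the set $U\cap C$ is a nonempty unfounded set of $\Pi_C$ with respect to $\mathbf{A}$.
   Context: Ground HEX-programs. A ground ordinary atom is $p(c_1,\dots,c_\ell)$. A ground external atom is $\&g[\vec p](\vec c)$ with input list $\vec p=p_1,\dots,p_k$ (predicate names or constants) and output constants $\vec c$. A ground HEX-program is a finite set of rules $r$: $a_1\lor\dots\lor a_k\leftarrow b_1,\dots,b_m,\mathrm{not}\,b_{m+1},\dots,\mathrm{not}\,b_n$, with ordinary ground head atoms $a_i$ and each $b_j$ an ordinary or external ground atom; $H(r)=\{a_1,\dots,a_k\}$, $B^+(r)=\{b_1,\dots,b_m\}$, $B^-(r)=\{b_{m+1},\dots,b_n\}$, $B(r)$ the set of body literals. $A(\Pi)$ is the set of ordinary atoms occurring in $\Pi$. Interpretations: complete consistent sets $\mathbf{A}$ of signed literals $\mathbf{T}a$/$\mathbf{F}a$. $\mathbf{A}\models a$ (ordinary) iff $\mathbf{T}a\in\mathbf{A}$; $\mathbf{A}\models\&g[\vec p](\vec c)$ iff the Boolean oracle $f_{\&g}(\mathbf{A},\vec p,\vec c)=1$, where the oracle's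 value depends only on the extensions in $\mathbf{A}$ of the input predicates in $\vec p$; $\mathbf{A}\models\mathrm{not}\,b$ iff $\mathbf{A}\not\models b$. Unfounded sets: for a set $X$ of ordinary ground atoms appearing in $\Pi$, $\mathbf{A}\,\dot\cup\neg.\,X=(\mathbf{A}\setminus\{\mathbf{T}a\mid a\in X\})\cup\{\mathbf{F}a\mid a\in X\}$; $X$ is an unfounded set of $\Pi$ w.r.t. $\mathbf{A}$ iff for every $r\in\Pi$ with $H(r)\cap X\neq\emptyset$: (i) some literal of $B(r)$ is false w.r.t. $\mathbf{A}$, or (ii) some literal of $B(r)$ is false w.r.t. $\mathbf{A}\,\dot\cup\neg.\,X$, or (iii) some atom of $H(r)\setminus X$ is true w.r.t. $\mathbf{A}$. Dependencies: $x\rightarrow y$ iff some $r\in\Pi$ has $x\in H(r)$, $y\in B^+(r)$; $x\rightarrow_e y$ iff some $r\in\Pi$ has $x\in H(r)$ and an external atom $\&g[q_1,\dots,q_n](\vec e)\in B^+(r)\cup B^-(r)$ with some $q_i$ equal to the predicate of $y$. *)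

theory Defs
  imports Main
begin

datatype ('p, 'c) oatom = OAtom (pred: 'p) "'c list"

datatype ('p, 'c) input = PredIn 'p | ConstIn 'c

datatype ('g, 'p, 'c) batom =
    Ord "('p, 'c) oatom"
  | Ext 'g "('p, 'c) input list" "'c list"

datatype ('g, 'p, 'c) rule =
  Rule (head: "('p, 'c) oatom list") (pos: "('g, 'p, 'c) batom list") (neg: "('g, 'p, 'c) batom list")

definition H :: "('g, 'p, 'c) rule \<Rightarrow> ('p, 'c) oatom set" where
  "H r = set (head r)"

definition Bpos :: "('g, 'p, 'c) rule \<Rightarrow> ('g, 'p, 'c) batom set" where
  "Bpos r = set (pos r)"

definition Bneg :: "('g, 'p, 'c) rule \<Rightarrow> ('g, 'p, 'c) batom set" where
  "Bneg r = set (neg r)"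

definition atoms :: "('g, 'p, 'c) rule set \<Rightarrow> ('p, 'c) oatom set" where
  "atoms P = (\<Union>r\<in>P. H r \<union> {a. Ord a \<in> Bpos r \<union> Bneg r})"

text \<open>An interpretation (complete consistent set of signed literals) is represented by
  the set of ordinary atoms signed true; every other atom is signed false.\<close>

type_synonym ('p, 'c) interp = "('p, 'c) oatom set"
type_synonym ('g, 'p, 'c) extsem = "'g \<Rightarrow> ('p, 'c) interp \<Rightarrow> ('p, 'c) input list \<Rightarrow> 'c list \<Rightarrow> bool"

definition extsem_ok :: "('g, 'p, 'c) extsem \<Rightarrow> bool" where
  "extsem_ok f \<longleftrightarrow> (\<forall>g A A' ps cs.
     (\<forall>p. PredIn p \<in> set ps \<longrightarrow> (\<forall>xs. OAtom p xs \<in> A \<longleftrightarrow> OAtom p xs \<in> A'))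
     \<longrightarrow> f g A ps cs = f g A' ps cs)"

fun sat :: "('g, 'p, 'c) extsem \<Rightarrow> ('p, 'c) interp \<Rightarrow> ('g, 'p, 'c) batom \<Rightarrow> bool" where
  "sat f A (Ord a) \<longleftrightarrow> a \<in> A"
| "sat f A (Ext g ps cs) \<longleftrightarrow> f g A ps cs"

definition body_false :: "('g, 'p, 'c) extsem \<Rightarrow> ('p, 'c) interp \<Rightarrow> ('g, 'p, 'c) rule \<Rightarrow> bool" where
  "body_false f A r \<longleftrightarrow> (\<exists>b\<in>Bpos r. \<not> sat f A b) \<or> (\<exists>b\<in>Bneg r. sat f A b)"

definition falsify :: "('p, 'c) interp \<Rightarrow> ('p, 'c) oatom set \<Rightarrow> ('p, 'c) interp" where
  "falsify A X = A - X"

definition unfounded :: "('g, 'p, 'c) extsem \<Rightarrow> ('g, 'p, 'c) rule set \<Rightarrow> ('p, 'c) interp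
     \<Rightarrow> ('p, 'c) oatom set \<Rightarrow> bool" where
  "unfounded f P A X \<longleftrightarrow>
     (\<forall>r\<in>P. H r \<inter> X \<noteq> {} \<longrightarrow>
        body_false f A r \<or> body_false f (falsify A X) r \<or> (\<exists>a\<in>H r - X. a \<in> A))"

definition dep :: "('g, 'p, 'c) rule set \<Rightarrow> (('p, 'c) oatom \<times> ('p, 'c) oatom) set" where
  "dep P = {(x, y). \<exists>r\<in>P. x \<in> H r \<and> Ord y \<in> Bpos r}"

definition dep_e :: "('g, 'p, 'c) rule set \<Rightarrow> (('p, 'c) oatom \<times> ('p, 'c) oatom) set" where
  "dep_e P = {(x, y). \<exists>r\<in>P. x \<in> H r \<and>
      (\<exists>g ps cs. Ext g ps cs \<in> Bpos r \<union> Bneg r \<and> PredIn (pred y) \<in> set ps)}"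

definition dep_graph :: "('g, 'p, 'c) rule set \<Rightarrow> (('p, 'c) oatom \<times> ('p, 'c) oatom) set" where
  "dep_graph P = (dep P \<union> dep_e P) \<inter> (atoms P \<times> atoms P)"

definition strongly_connected :: "('g, 'p, 'c) rule set \<Rightarrow> ('p, 'c) oatom set \<Rightarrow> bool" where
  "strongly_connected P S \<longleftrightarrow> S \<noteq> {} \<and> S \<subseteq> atoms P \<and>
     (\<forall>x\<in>S. \<forall>y\<in>S. (x, y) \<in> (dep_graph P)\<^sup>*)"

definition sccs :: "('g, 'p, 'c) rule set \<Rightarrow> ('p, 'c) oatom set set" where
  "sccs P = {C. strongly_connected P C \<and> (\<forall>C'. strongly_connected P C' \<and> C \<subseteq> C' \<longrightarrow> C' = C)}"

definition comp_prog :: "('g, 'p, 'c) rule set \<Rightarrow> ('p, 'c) oatom set \<Rightarrow> ('g, 'p, 'c) rule set" where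
  "comp_prog P C = {r\<in>P. H r \<inter> C \<noteq> {}}"

end

theory Submission
  imports Defs
begin

lemma atoms_finite: "finite P \<Longrightarrow> finite (atoms P)"
  unfolding atoms_def
proof (rule finite_UN_I, assumption)
  fix r :: "('g,'p,'c) rule"
  have "{a. Ord a \<in> Bpos r \<union> Bneg r} = Ord -` (set (pos r) \<union> set (neg r))"
    by (auto simp: Bpos_def Bneg_def)
  moreover have "finite (Ord -` (set (pos r) \<union> set (neg r)) :: ('p,'c) oatom set)"
    by (rule finite_vimageI) (auto simp: inj_def)
  ultimately show "finite (H r \<union> {a. Ord a \<in> Bpos r \<union> Bneg r})"
    by (simp add: H_def)
qed

theorem proposition3:
  fixes P :: "('g, 'p, 'c) rule set" and f :: "('g, 'p, 'c) extsem"
    and A :: "('p, 'c) interp" and U :: "('p, 'c) oatom set"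
  assumes "finite P"
    and "extsem_ok f"
    and "U \<noteq> {}"
    and "U \<subseteq> atoms P"
    and "unfounded f P A U"
  shows "\<exists>C\<in>sccs P. U \<inter> C \<noteq> {} \<and> unfounded f (comp_prog P C) A (U \<inter> C)"
proof -
  define R where "R = dep_graph P"
  have finU: "finite U" using atoms_finite[OF assms(1)] assms(4) finite_subset by blast
  define S where "S x = {y\<in>U. (x,y)\<in>R\<^sup>*}" for x
  obtain x0 where x0U: "x0 \<in> U" using assms(3) by blast
  obtain x where xU: "x \<in> U" and xmin: "\<forall>y. y \<in> U \<longrightarrow> card (S x) \<le> card (S y)"
    using ex_has_least_nat[of "\<lambda>x. x \<in> U" x0 "\<lambda>x. card (S x)"] x0U by blast
  have backr: "(y,x) \<in> R\<^sup>*" if "y \<in> U" "(x,y) \<in> R\<^sup>*" for y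
  proof -
    have sub: "S y \<subseteq> S x"
    proof
      fix z assume "z \<in> S y"
      then have "z \<in> U" "(y,z) \<in> R\<^sup>*" by (simp_all add: S_def)
      then show "z \<in> S x" using that(2) by (simp add: S_def rtrancl_trans[of x y R z])
    qed
    have "finite (S x)" using finU by (simp add: S_def)
    moreover have "card (S x) \<le> card (S y)" using xmin that(1) by blast
    ultimately have "S y = S x" using sub by (meson card_seteq)
    moreover have "x \<in> S x" using xU by (simp add: S_def)
    ultimately have "x \<in> S y" by simp
    then show ?thesis by (simp add: S_def)
  qed
  define C where "C = {z\<in>atoms P. (x,z)\<in>R\<^sup>* \<and> (z,x)\<in>R\<^sup>*}"
  have xC: "x \<in> C" using xU assms(4) by (auto simp: C_def)
  have sc: "strongly_connected P C"
    unfolding strongly_connected_def using xC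
  proof (intro conjI ballI)
    show "C \<noteq> {}" using xC by blast
    show "C \<subseteq> atoms P" by (auto simp: C_def)
    fix a b assume "a \<in> C" "b \<in> C"
    then have "(a,x) \<in> R\<^sup>*" "(x,b) \<in> R\<^sup>*" by (auto simp: C_def)
    then show "(a, b) \<in> (dep_graph P)\<^sup>*" unfolding R_def by (rule rtrancl_trans)
  qed
  have CS: "C \<in> sccs P"
  proof -
    have "C' = C" if sc': "strongly_connected P C'" and sub: "C \<subseteq> C'" for C'
    proof
      show "C' \<subseteq> C"
      proof
        fix z assume "z \<in> C'"
        have "x \<in> C'" using sub xC by blast
        moreover have all: "\<forall>a\<in>C'. \<forall>b\<in>C'. (a, b) \<in> R\<^sup>*" and "C' \<subseteq> atoms P"
          using sc' unfolding strongly_connected_def R_def by auto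
        ultimately show "z \<in> C" using \<open>z \<in> C'\<close> unfolding C_def by blast
      qed
    qed (rule sub)
    then show ?thesis using sc unfolding sccs_def by blast
  qed
  have reach: "y \<in> C" if "h \<in> C" "y \<in> U" "(h,y) \<in> R" for h y
  proof -
    have "(x,h) \<in> R\<^sup>*" using that(1) by (simp add: C_def)
    then have "(x,y) \<in> R\<^sup>*" using that(3) by (rule rtrancl.rtrancl_into_rtrancl)
    moreover have "(y,x) \<in> R\<^sup>*" using backr[OF that(2) calculation] .
    moreover have "y \<in> atoms P" using that(2) assms(4) by blast
    ultimately show ?thesis by (simp add: C_def)
  qed
  have "unfounded f (comp_prog P C) A (U \<inter> C)"
    unfolding unfounded_def
  proof (intro ballI impI)
    fix r assume rC: "r \<in> comp_prog P C" and hU: "H r \<inter> (U \<inter> C) \<noteq> {}"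
    then have rP: "r \<in> P" by (simp add: comp_prog_def)
    obtain h where hH: "h \<in> H r" and hUC: "h \<in> U" "h \<in> C" using hU by blast
    have hat: "h \<in> atoms P" using rP hH by (auto simp: atoms_def)
    have ordpos: "y \<in> C" if "Ord y \<in> Bpos r" "y \<in> U" for y
    proof -
      have "y \<in> atoms P" using that rP by (auto simp: atoms_def)
      moreover have "(h,y) \<in> dep P" unfolding dep_def using that rP hH by blast
      ultimately have "(h,y) \<in> R" using hat unfolding R_def dep_graph_def by blast
      then show ?thesis using reach hUC that by blast
    qed
    have extin: "y \<in> C" if "Ext g ps cs \<in> Bpos r \<union> Bneg r" "PredIn (pred y) \<in> set ps" "y \<in> U" for g ps cs y
    proof -
      have "y \<in> atoms P" using that assms(4) by blast
      moreover have "(h,y) \<in> dep_e P" unfolding dep_e_def using that rP hH by blast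
      ultimately have "(h,y) \<in> R" using hat unfolding R_def dep_graph_def by blast
      then show ?thesis using reach hUC that by blast
    qed
    have exteq: "f g (A - U) ps cs = f g (A - U \<inter> C) ps cs"
      if "Ext g ps cs \<in> Bpos r \<union> Bneg r" for g ps cs
    proof -
      have "\<forall>p. PredIn p \<in> set ps \<longrightarrow> (\<forall>xs. OAtom p xs \<in> A - U \<longleftrightarrow> OAtom p xs \<in> A - U \<inter> C)"
      proof (intro allI impI)
        fix p xs assume "PredIn p \<in> set ps"
        then have "OAtom p xs \<in> U \<Longrightarrow> OAtom p xs \<in> C"
          using extin[OF that, of "OAtom p xs"] by simp
        then show "OAtom p xs \<in> A - U \<longleftrightarrow> OAtom p xs \<in> A - U \<inter> C" by blast
      qed
      moreover have "\<And>A' A''. (\<forall>p. PredIn p \<in> set ps \<longrightarrow> (\<forall>xs. OAtom p xs \<in> A' \<longleftrightarrow> OAtom p xs \<in> A'')) \<Longrightarrow> f g A' ps cs = f g A'' ps cs"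
        using assms(2) unfolding extsem_ok_def by blast
      ultimately show ?thesis by blast
    qed
    have pos_ok: "\<not> sat f (A - U \<inter> C) b" if "b \<in> Bpos r" "\<not> sat f (A - U) b" for b
    proof (cases b)
      case (Ord y) then show ?thesis using that ordpos by auto
    next
      case (Ext g ps cs) then show ?thesis using that exteq by auto
    qed
    have neg_ok: "sat f (A - U \<inter> C) b" if "b \<in> Bneg r" "sat f (A - U) b" for b
    proof (cases b)
      case (Ord y) then show ?thesis using that by auto
    next
      case (Ext g ps cs) then show ?thesis using that exteq by auto
    qed
    have "body_false f A r \<or> body_false f (falsify A U) r \<or> (\<exists>a\<in>H r - U. a \<in> A)"
      using assms(5) rP hH hUC unfolding unfounded_def by blast
    then show "body_false f A r \<or> body_false f (falsify A (U \<inter> C)) r \<or> (\<exists>a\<in>H r - U \<inter> C. a \<in> A)"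
    proof (elim disjE)
      assume "body_false f (falsify A U) r"
      then have "body_false f (falsify A (U \<inter> C)) r"
        unfolding body_false_def falsify_def using pos_ok neg_ok by blast
      then show ?thesis by blast
    qed auto
  qed
  then show ?thesis using CS xC xU by blast
qed

end
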